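(* Let $u>0$, $\Delta x>0$, and let $\varphi:\mathbb R\to\mathbb R$ satisfy $0\le\varphi(r)\le 1$ for all $r$ (for instance the Minmod limiter $\varphi(r)=\mathrm{minmod}(1,r)$). Let $t\mapsto c(t)=(c_j(t))_{j\in\mathbb Z}$ be a $C^1$ map from an interval $I\subset\mathbb R$ into $\ell^2(\mathbb Z)$ satisfying, for all $t\in I$ and $j\in\mathbb Z$, $$\frac{d}{dt}c_j(t)+u\,\frac{c_{j+\frac12}(t)-c_{j-\frac12}(t)}{\Delta x}=0,\qquad c_{j+\frac12}=c_j+\tfrac12(c_{j+1}-c_j)\,\varphi_{j+\frac12},$$ where $\varphi_{j+\frac12}=\varphi\!\left(\frac{c_j-c_{j-1}}{c_{j+1}-c_j}\right)$ if $c_{j+1}\ne c_j$ and $\varphi_{j+\frac12}$ is an arbitrary number in $[0,1]$ if $c_{j+1}=c_j$. Then for all $t\in I$, $$\frac{\Delta x}{2}\frac{d}{dt}\sum_{j\in\mathbb Z}|c_j(t)|^2=-\frac u2\sum_{j\in\mathbb Z}|c_j(t)-c_{j-1}(t)|^2\bigl(1-\varphi_{j-\frac12}(t)\bigr)\le 0 ,$$ so in particular $t\mapsto\sum_j|c_j(t)|^2$ is non-increasing.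
   Context: The function $\mathrm{minmod}:\mathbb R^2\to\mathbb R$ is defined by $\mathrm{minmod}(a,b)=0$ if $ab\le 0$, $\mathrm{minmod}(a,b)=\min(a,b)$ if $a,b>0$, and $\mathrm{minmod}(a,b)=\max(a,b)$ if $a,b<0$. *)

theory Defs
  imports "HOL-Analysis.Analysis"
begin

definition minmod :: "real \<Rightarrow> real \<Rightarrow> real" where
  "minmod a b = (if a * b \<le> 0 then 0 else if a > 0 then min a b else max a b)"

definition l2 :: "(int \<Rightarrow> real) \<Rightarrow> bool" where
  "l2 x \<longleftrightarrow> (\<lambda>j. (x j)^2) summable_on UNIV"

definition l2norm :: "(int \<Rightarrow> real) \<Rightarrow> real" where
  "l2norm x = sqrt (\<Sum>\<^sub>\<infinity>j. (x j)^2)"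

definition l2_C1_on :: "real set \<Rightarrow> (real \<Rightarrow> int \<Rightarrow> real) \<Rightarrow> bool" where
  "l2_C1_on I c \<longleftrightarrow> (\<exists>c'.
     (\<forall>t\<in>I. l2 (c t) \<and> l2 (c' t)) \<and>
     (\<forall>t\<in>I. ((\<lambda>s. l2norm (\<lambda>j. c s j - c t j - (s - t) * c' t j) / \<bar>s - t\<bar>)
              \<longlongrightarrow> 0) (at t within I)) \<and>
     (\<forall>t\<in>I. ((\<lambda>s. l2norm (\<lambda>j. c' s j - c' t j)) \<longlongrightarrow> 0) (at t within I)))"

end

theory Submission
  imports Defs
begin

lemma sq_sum_le: "((a::real) + b)^2 \<le> 2*a^2 + 2*b^2"
proof -
  have "0 \<le> (a - b)^2" by simp
  moreover have "(a + b)^2 + (a - b)^2 = 2*a^2 + 2*b^2" by (simp add: power2_eq_square algebra_simps)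
  ultimately show ?thesis by linarith
qed

lemma abs_prod_le: "\<bar>(a::real)\<bar> * \<bar>b\<bar> \<le> a^2 + b^2"
proof -
  have "0 \<le> (\<bar>a\<bar> - \<bar>b\<bar>)^2" by simp
  moreover have "(\<bar>a\<bar> - \<bar>b\<bar>)^2 = a^2 + b^2 - 2 * (\<bar>a\<bar> * \<bar>b\<bar>)" by (simp add: power2_eq_square algebra_simps)
  moreover have "0 \<le> \<bar>a\<bar> * \<bar>b\<bar>" by simp
  ultimately show ?thesis by linarith
qed

lemma summable_on_diff: fixes f g :: "'a \<Rightarrow> real"
  assumes "f summable_on A" "g summable_on A" shows "(\<lambda>x. f x - g x) summable_on A"
  using summable_on_add[OF assms(1) summable_on_uminus[THEN iffD2, OF assms(2)]] by simp

lemma infsum_diff: fixes f g :: "'a \<Rightarrow> real"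
  assumes "f summable_on A" "g summable_on A" shows "infsum (\<lambda>x. f x - g x) A = infsum f A - infsum g A"
  using infsum_add[OF assms(1) summable_on_uminus[THEN iffD2, OF assms(2)]] infsum_uminus[of g A] by simp

lemma l2_add: assumes "l2 x" "l2 y" shows "l2 (\<lambda>j. x j + y j)"
proof -
  have s: "(\<lambda>j. 2*(x j)^2 + 2*(y j)^2) summable_on UNIV"
    using assms unfolding l2_def by (intro summable_on_add summable_on_cmult_right) auto
  have "\<And>j. (x j + y j)^2 \<le> 2*(x j)^2 + 2*(y j)^2"
    by (rule sq_sum_le)
  then show ?thesis unfolding l2_def by (intro summable_on_comparison_test[OF s]) auto
qed

lemma l2_scale: assumes "l2 x" shows "l2 (\<lambda>j. a * x j)"
  using summable_on_cmult_right[of "\<lambda>j. (x j)^2" UNIV "a^2"] assms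
  unfolding l2_def by (simp add: power_mult_distrib)

lemma l2_diff: assumes "l2 x" "l2 y" shows "l2 (\<lambda>j. x j - y j)"
  using l2_add[OF assms(1) l2_scale[OF assms(2), of "-1"]] by simp

lemma l2_prod: assumes "l2 x" "l2 y" shows "(\<lambda>j. x j * y j) summable_on UNIV"
proof -
  have s: "(\<lambda>j. (x j)^2 + (y j)^2) summable_on UNIV"
    using assms unfolding l2_def by (intro summable_on_add) auto
  have "\<And>j. norm (x j * y j) \<le> (x j)^2 + (y j)^2"
    by (simp add: abs_mult abs_prod_le)
  then have "(\<lambda>j. norm (x j * y j)) summable_on UNIV"
    by (intro summable_on_comparison_test[OF s]) auto
  then show ?thesis by (rule summable_on_iff_abs_summable_on_real[THEN iffD2])
qed

lemma shift_summable: "(\<lambda>j::int. f (j + k)) summable_on UNIV \<longleftrightarrow> f summable_on UNIV"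
  by (rule summable_on_reindex_bij_betw) (rule bij_betwI[where g="\<lambda>j. j - k"], auto)

lemma shift_infsum: "(\<Sum>\<^sub>\<infinity>j::int. f (j + k)) = (\<Sum>\<^sub>\<infinity>j. f j)"
  by (rule infsum_reindex_bij_betw) (rule bij_betwI[where g="\<lambda>j. j - k"], auto)

lemma l2_shift: assumes "l2 x" shows "l2 (\<lambda>j. x (j + k))"
  using assms shift_summable[of "\<lambda>j. (x j)^2" k] unfolding l2_def by simp

lemma l2_sq_nonneg: "(\<Sum>\<^sub>\<infinity>j. (x j)^2) \<ge> (0::real)"
  by (rule infsum_nonneg) auto

lemma l2norm_sq: "(l2norm x)^2 = (\<Sum>\<^sub>\<infinity>j. (x j)^2)"
  unfolding l2norm_def using l2_sq_nonneg by simp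

lemma l2_coord: assumes "l2 x" shows "\<bar>x j\<bar> \<le> l2norm x"
proof -
  have "sum (\<lambda>j. (x j)^2) {j} \<le> (\<Sum>\<^sub>\<infinity>j. (x j)^2)"
    using assms unfolding l2_def by (intro finite_sum_le_infsum) auto
  then show ?thesis unfolding l2norm_def by (simp add: real_le_rsqrt)
qed

lemma cauchy_schwarz: assumes "l2 x" "l2 y"
  shows "\<bar>\<Sum>\<^sub>\<infinity>j. x j * y j\<bar> \<le> l2norm x * l2norm y"
proof -
  have ab: "(\<lambda>j. norm (x j * y j)) summable_on UNIV"
    using l2_prod[OF assms] by (rule summable_on_iff_abs_summable_on_real[THEN iffD1])
  have "\<bar>\<Sum>\<^sub>\<infinity>j. x j * y j\<bar> \<le> (\<Sum>\<^sub>\<infinity>j. norm (x j * y j))"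
    using norm_infsum_bound[OF ab] by simp
  also have "\<dots> \<le> l2norm x * l2norm y"
  proof (rule infsum_le_finite_sums[OF ab])
    fix F :: "int set" assume F: "finite F"
    have "sum (\<lambda>j. norm (x j * y j)) F = (\<Sum>j\<in>F. \<bar>x j\<bar> * \<bar>y j\<bar>)" by (simp add: abs_mult)
    also have "\<dots> \<le> L2_set x F * L2_set y F" by (rule L2_set_mult_ineq)
    also have "\<dots> \<le> l2norm x * l2norm y"
    proof (rule mult_mono)
      show "L2_set x F \<le> l2norm x" unfolding L2_set_def l2norm_def
        using assms(1) F unfolding l2_def by (intro real_sqrt_le_mono finite_sum_le_infsum) auto
      show "L2_set y F \<le> l2norm y" unfolding L2_set_def l2norm_def
        using assms(2) F unfolding l2_def by (intro real_sqrt_le_mono finite_sum_le_infsum) auto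
    qed (auto simp: l2norm_def L2_set_def l2_sq_nonneg sum_nonneg)
    finally show "sum (\<lambda>j. norm (x j * y j)) F \<le> l2norm x * l2norm y" .
  qed
  finally show ?thesis .
qed

lemma norm_sq_deriv:
  fixes c :: "real \<Rightarrow> int \<Rightarrow> real" and v :: "int \<Rightarrow> real"
  assumes t: "t \<in> I" and lc: "\<And>s. s \<in> I \<Longrightarrow> l2 (c s)" and lv: "l2 v"
    and fr: "((\<lambda>s. l2norm (\<lambda>j. c s j - c t j - (s - t) * v j) / \<bar>s - t\<bar>) \<longlongrightarrow> 0) (at t within I)"
  shows "((\<lambda>s. \<Sum>\<^sub>\<infinity>j. \<bar>c s j\<bar>^2) has_real_derivative 2 * (\<Sum>\<^sub>\<infinity>j. c t j * v j)) (at t within I)"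
proof -
  define e where "e s = l2norm (\<lambda>j. c s j - c t j - (s - t) * v j) / \<bar>s - t\<bar>" for s
  define A where "A = (\<Sum>\<^sub>\<infinity>j. (v j)^2)"
  define B where "B = l2norm (c t)"
  define D where "D = 2 * (\<Sum>\<^sub>\<infinity>j. c t j * v j)"
  define f where "f s = (\<Sum>\<^sub>\<infinity>j. (c s j)^2)" for s
  have e0: "(e \<longlongrightarrow> 0) (at t within I)" using fr unfolding e_def .
  have B0: "B \<ge> 0" unfolding B_def l2norm_def using l2_sq_nonneg by simp
  have A0: "A \<ge> 0" unfolding A_def by (rule l2_sq_nonneg)
  have lim: "((\<lambda>s. 2 * (e s)^2 * \<bar>s - t\<bar> + 2 * \<bar>s - t\<bar> * A + 2 * B * e s) \<longlongrightarrow> 0) (at t within I)"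
  proof -
    have "((\<lambda>s. 2 * (e s)^2 * \<bar>s - t\<bar> + 2 * \<bar>s - t\<bar> * A + 2 * B * e s) \<longlongrightarrow>
          2 * 0^2 * \<bar>t - t\<bar> + 2 * \<bar>t - t\<bar> * A + 2 * B * 0) (at t within I)"
      by (intro tendsto_intros e0)
    then show ?thesis by simp
  qed
  have bound: "eventually (\<lambda>s. norm ((f s - f t) / (s - t) - D) \<le>
       2 * (e s)^2 * \<bar>s - t\<bar> + 2 * \<bar>s - t\<bar> * A + 2 * B * e s) (at t within I)"
    unfolding eventually_at_filter
  proof (intro always_eventually allI impI)
    fix s assume st: "s \<noteq> t" and sI: "s \<in> I"
    define \<delta> where "\<delta> = s - t"
    define r where "r j = c s j - c t j - \<delta> * v j" for j
    have d0: "\<delta> \<noteq> 0" using st unfolding \<delta>_def by simp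
    have ls: "l2 (c s)" and lt: "l2 (c t)" using lc sI t by auto
    have lr: "l2 r" unfolding r_def using ls lt lv by (intro l2_diff l2_scale) auto
    have ld: "l2 (\<lambda>j. c s j - c t j)" using ls lt by (rule l2_diff)
    have er: "l2norm r = e s * \<bar>\<delta>\<bar>" unfolding e_def r_def \<delta>_def using st by simp
    have S1: "(\<lambda>j. (c s j)^2) summable_on UNIV" "(\<lambda>j. (c t j)^2) summable_on UNIV"
      using ls lt unfolding l2_def by auto
    have S2: "(\<lambda>j. c t j * v j) summable_on UNIV" using l2_prod[OF lt lv] .
    have S3: "(\<lambda>j. (c s j - c t j)^2) summable_on UNIV" using ld unfolding l2_def .
    have S4: "(\<lambda>j. c t j * r j) summable_on UNIV" using l2_prod[OF lt lr] .
    have eq1: "f s - f t - \<delta> * D = (\<Sum>\<^sub>\<infinity>j. (c s j)^2 - (c t j)^2 - 2 * \<delta> * (c t j * v j))"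
    proof -
      have "(\<Sum>\<^sub>\<infinity>j. (c s j)^2 - (c t j)^2 - 2 * \<delta> * (c t j * v j)) =
            (\<Sum>\<^sub>\<infinity>j. (c s j)^2 - (c t j)^2) - (\<Sum>\<^sub>\<infinity>j. 2 * \<delta> * (c t j * v j))"
        by (intro infsum_diff summable_on_diff S1 summable_on_cmult_right S2)
      also have "\<dots> = f s - f t - \<delta> * D"
        unfolding f_def D_def by (simp add: infsum_diff S1 infsum_cmult_right S2)
      finally show ?thesis by simp
    qed
    also have "\<dots> = (\<Sum>\<^sub>\<infinity>j. (c s j - c t j)^2 + 2 * (c t j * r j))"
      by (intro infsum_cong) (simp add: r_def algebra_simps power2_eq_square)
    also have "\<dots> = (\<Sum>\<^sub>\<infinity>j. (c s j - c t j)^2) + 2 * (\<Sum>\<^sub>\<infinity>j. c t j * r j)"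
      by (simp add: infsum_add S3 summable_on_cmult_right S4 infsum_cmult_right)
    finally have eq2: "f s - f t - \<delta> * D = (\<Sum>\<^sub>\<infinity>j. (c s j - c t j)^2) + 2 * (\<Sum>\<^sub>\<infinity>j. c t j * r j)" .
    have P1: "0 \<le> (\<Sum>\<^sub>\<infinity>j. (c s j - c t j)^2)" by (rule l2_sq_nonneg)
    have P2: "(\<Sum>\<^sub>\<infinity>j. (c s j - c t j)^2) \<le> (\<Sum>\<^sub>\<infinity>j. 2 * (r j)^2 + 2 * \<delta>^2 * (v j)^2)"
    proof (rule infsum_mono[OF S3])
      show "(\<lambda>j. 2 * (r j)^2 + 2 * \<delta>^2 * (v j)^2) summable_on UNIV"
        using lr lv unfolding l2_def by (intro summable_on_add summable_on_cmult_right) auto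
      fix j
      have "c s j - c t j = r j + \<delta> * v j" unfolding r_def by simp
      then show "(c s j - c t j)^2 \<le> 2 * (r j)^2 + 2 * \<delta>^2 * (v j)^2"
        using sq_sum_le[of "r j" "\<delta> * v j"] by (simp add: power_mult_distrib)
    qed
    also have "\<dots> = 2 * (e s * \<bar>\<delta>\<bar>)^2 + 2 * \<delta>^2 * A"
    proof -
      have "(\<Sum>\<^sub>\<infinity>j. 2 * (r j)^2 + 2 * \<delta>^2 * (v j)^2) = 2 * (\<Sum>\<^sub>\<infinity>j. (r j)^2) + 2 * \<delta>^2 * A"
        using lr lv unfolding l2_def A_def
        by (simp add: infsum_add summable_on_cmult_right infsum_cmult_right)
      then show ?thesis using l2norm_sq[of r] er by simp
    qed
    finally have P3: "(\<Sum>\<^sub>\<infinity>j. (c s j - c t j)^2) \<le> 2 * (e s * \<bar>\<delta>\<bar>)^2 + 2 * \<delta>^2 * A" .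
    have P4: "\<bar>\<Sum>\<^sub>\<infinity>j. c t j * r j\<bar> \<le> B * (e s * \<bar>\<delta>\<bar>)"
      using cauchy_schwarz[OF lt lr] er unfolding B_def by simp
    have main: "\<bar>f s - f t - \<delta> * D\<bar> \<le> \<bar>\<delta>\<bar> * (2 * (e s)^2 * \<bar>\<delta>\<bar> + 2 * \<bar>\<delta>\<bar> * A + 2 * B * e s)"
    proof -
      have "\<bar>f s - f t - \<delta> * D\<bar> \<le> 2 * (e s * \<bar>\<delta>\<bar>)^2 + 2 * \<delta>^2 * A + 2 * (B * (e s * \<bar>\<delta>\<bar>))"
        unfolding eq2 using P1 P3 P4 by linarith
      also have "\<dots> = \<bar>\<delta>\<bar> * (2 * (e s)^2 * \<bar>\<delta>\<bar> + 2 * \<bar>\<delta>\<bar> * A + 2 * B * e s)"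
        by (simp add: algebra_simps power2_eq_square)
      finally show ?thesis .
    qed
    have "(f s - f t) / (s - t) - D = (f s - f t - \<delta> * D) / \<delta>"
      using d0 unfolding \<delta>_def by (simp add: field_simps)
    then have "norm ((f s - f t) / (s - t) - D) = \<bar>f s - f t - \<delta> * D\<bar> / \<bar>\<delta>\<bar>"
      by (simp add: abs_divide)
    also have "\<dots> \<le> 2 * (e s)^2 * \<bar>\<delta>\<bar> + 2 * \<bar>\<delta>\<bar> * A + 2 * B * e s"
      using main d0 by (simp add: divide_le_eq mult.commute)
    finally show "norm ((f s - f t) / (s - t) - D) \<le> 2 * (e s)^2 * \<bar>s - t\<bar> + 2 * \<bar>s - t\<bar> * A + 2 * B * e s"
      unfolding \<delta>_def .
  qed
  have "((\<lambda>s. (f s - f t) / (s - t) - D) \<longlongrightarrow> 0) (at t within I)"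
    by (rule Lim_null_comparison[OF bound lim])
  then have "((\<lambda>s. (f s - f t) / (s - t)) \<longlongrightarrow> D) (at t within I)"
    by (rule LIM_zero_cancel)
  then have "(f has_real_derivative D) (at t within I)"
    by (simp add: has_field_derivative_iff)
  then show ?thesis unfolding f_def D_def by simp
qed

lemma coord_deriv:
  fixes c :: "real \<Rightarrow> int \<Rightarrow> real" and v :: "int \<Rightarrow> real"
  assumes t: "t \<in> I" and lc: "\<And>s. s \<in> I \<Longrightarrow> l2 (c s)" and lv: "l2 v"
    and fr: "((\<lambda>s. l2norm (\<lambda>j. c s j - c t j - (s - t) * v j) / \<bar>s - t\<bar>) \<longlongrightarrow> 0) (at t within I)"
    and nt: "\<not> trivial_limit (at t within I)"
    and d: "((\<lambda>s. c s j) has_real_derivative d) (at t within I)"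
  shows "d = v j"
proof -
  have bound: "eventually (\<lambda>s. norm ((c s j - c t j) / (s - t) - v j) \<le>
       l2norm (\<lambda>j. c s j - c t j - (s - t) * v j) / \<bar>s - t\<bar>) (at t within I)"
    unfolding eventually_at_filter
  proof (intro always_eventually allI impI)
    fix s assume st: "s \<noteq> t" and sI: "s \<in> I"
    have lr: "l2 (\<lambda>j. c s j - c t j - (s - t) * v j)"
      using lc[OF sI] lc[OF t] lv by (intro l2_diff l2_scale) auto
    have "(c s j - c t j) / (s - t) - v j = (c s j - c t j - (s - t) * v j) / (s - t)"
      using st by (simp add: field_simps)
    then have "norm ((c s j - c t j) / (s - t) - v j) = \<bar>c s j - c t j - (s - t) * v j\<bar> / \<bar>s - t\<bar>"
      by (simp add: abs_divide)
    also have "\<dots> \<le> l2norm (\<lambda>j. c s j - c t j - (s - t) * v j) / \<bar>s - t\<bar>"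
      using l2_coord[OF lr, of j] by (simp add: divide_right_mono)
    finally show "norm ((c s j - c t j) / (s - t) - v j) \<le> l2norm (\<lambda>j. c s j - c t j - (s - t) * v j) / \<bar>s - t\<bar>" .
  qed
  have "((\<lambda>s. (c s j - c t j) / (s - t) - v j) \<longlongrightarrow> 0) (at t within I)"
    by (rule Lim_null_comparison[OF bound fr])
  then have 1: "((\<lambda>s. (c s j - c t j) / (s - t)) \<longlongrightarrow> v j) (at t within I)"
    by (rule LIM_zero_cancel)
  have 2: "((\<lambda>s. (c s j - c t j) / (s - t)) \<longlongrightarrow> d) (at t within I)"
    using d by (simp add: has_field_derivative_iff)
  show ?thesis using tendsto_unique[OF nt 2 1] .
qed

lemma l2_bmult: assumes "l2 x" "\<And>j. \<bar>a j\<bar> \<le> 1" shows "l2 (\<lambda>j. a j * x j)"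
  unfolding l2_def
proof (rule summable_on_comparison_test)
  show "(\<lambda>j. (x j)^2) summable_on UNIV" using assms(1) unfolding l2_def .
  fix j
  have "(a j)^2 \<le> 1" using assms(2)[of j] by (simp add: abs_le_square_iff[symmetric] abs_square_le_1)
  then show "(a j * x j)^2 \<le> (x j)^2" by (simp add: power_mult_distrib mult_left_le_one_le)
qed simp

lemma pw_alg: "(a::real) * ((a + (b - a) * p / 2) - (z + (a - z) * q / 2)) = ((b - a)^2 * (1 - p) / 2 + (b * (a + (b - a) * p / 2) - b^2/2)) - (a * (z + (a - z) * q / 2) - a^2/2)"
  by (simp add: field_simps power2_eq_square)

lemma flux_identity:
  fixes c \<psi> :: "int \<Rightarrow> real"
  assumes lc: "l2 c" and p: "\<And>j. 0 \<le> \<psi> j \<and> \<psi> j \<le> 1"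
  defines "F \<equiv> \<lambda>j. c j + (c (j + 1) - c j) * \<psi> j / 2"
  shows "(\<lambda>j. (c j - c (j - 1))^2 * (1 - \<psi> (j - 1))) summable_on UNIV"
    and "(\<Sum>\<^sub>\<infinity>j. c j * (F j - F (j - 1))) = (\<Sum>\<^sub>\<infinity>j. (c j - c (j - 1))^2 * (1 - \<psi> (j - 1))) / 2"
proof -
  define d where "d j = c j - c (j - 1)" for j
  define g where "g j = (d j)^2 * (1 - \<psi> (j - 1)) / 2" for j
  define H where "H j = c j * F (j - 1) - (c j)^2 / 2" for j
  have lc1: "l2 (\<lambda>j. c (j + 1))" using l2_shift[OF lc] .
  have lcm: "l2 (\<lambda>j. c (j + -1))" using l2_shift[OF lc] .
  have ld: "l2 d" unfolding d_def using l2_diff[OF lc lcm] by simp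
  have lF: "l2 F"
  proof -
    have "l2 (\<lambda>j. (\<psi> j / 2) * (c (j + 1) - c j))"
      using p by (intro l2_bmult l2_diff lc1 lc) (auto simp: abs_le_iff intro: order_trans[of _ 1 2])
    from l2_add[OF lc this] show ?thesis unfolding F_def by (simp add: algebra_simps diff_divide_distrib)
  qed
  have lFm: "l2 (\<lambda>j. F (j + -1))" using l2_shift[OF lF] .
  have sd: "(\<lambda>j. (d j)^2 * (1 - \<psi> (j - 1))) summable_on UNIV"
  proof (rule summable_on_comparison_test)
    show "(\<lambda>j. (d j)^2) summable_on UNIV" using ld unfolding l2_def .
    fix j show "(d j)^2 * (1 - \<psi> (j - 1)) \<le> (d j)^2" "0 \<le> (d j)^2 * (1 - \<psi> (j - 1))"
      using p[of "j - 1"] by (auto simp: mult_left_le)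
  qed
  then show "(\<lambda>j. (c j - c (j - 1))^2 * (1 - \<psi> (j - 1))) summable_on UNIV" unfolding d_def .
  have sg: "g summable_on UNIV" unfolding g_def using summable_on_cmult_left[OF sd, of "1/2"] by simp
  have sH: "H summable_on UNIV" unfolding H_def
    using l2_prod[OF lc lFm] lc unfolding l2_def
    using summable_on_cmult_left[of "\<lambda>j. (c j)^2" UNIV "1/2"]
    by (intro summable_on_diff) auto
  have sG: "(\<lambda>j. g j + H j) summable_on UNIV" using sg sH by (rule summable_on_add)
  have sG1: "(\<lambda>j. g (j + 1) + H (j + 1)) summable_on UNIV"
    using shift_summable[of "\<lambda>j. g j + H j" 1] sG by simp
  have pw: "c j * (F j - F (j - 1)) = (g (j + 1) + H (j + 1)) - H j" for j
    unfolding g_def H_def d_def F_def using pw_alg[of "c j" "c (j + 1)" "\<psi> j" "c (j - 1)" "\<psi> (j - 1)"] by simp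
  have "(\<Sum>\<^sub>\<infinity>j. c j * (F j - F (j - 1))) = (\<Sum>\<^sub>\<infinity>j. (g (j + 1) + H (j + 1)) - H j)"
    using pw by simp
  also have "\<dots> = (\<Sum>\<^sub>\<infinity>j. g (j + 1) + H (j + 1)) - (\<Sum>\<^sub>\<infinity>j. H j)"
    by (rule infsum_diff[OF sG1 sH])
  also have "(\<Sum>\<^sub>\<infinity>j. g (j + 1) + H (j + 1)) = (\<Sum>\<^sub>\<infinity>j. g j + H j)"
    using shift_infsum[of "\<lambda>j. g j + H j" 1] by simp
  also have "\<dots> = (\<Sum>\<^sub>\<infinity>j. g j) + (\<Sum>\<^sub>\<infinity>j. H j)" by (rule infsum_add[OF sg sH])
  also have "(\<Sum>\<^sub>\<infinity>j. g j) = (\<Sum>\<^sub>\<infinity>j. (d j)^2 * (1 - \<psi> (j - 1))) / 2"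
    unfolding g_def using infsum_cmult_left[OF sd, of "1/2"] by simp
  finally show "(\<Sum>\<^sub>\<infinity>j. c j * (F j - F (j - 1))) = (\<Sum>\<^sub>\<infinity>j. (c j - c (j - 1))^2 * (1 - \<psi> (j - 1))) / 2"
    unfolding d_def by simp
qed

theorem mainTheorem2:
  fixes u dx :: real and \<phi> :: "real \<Rightarrow> real" and I :: "real set"
    and c :: "real \<Rightarrow> int \<Rightarrow> real" and \<psi> :: "real \<Rightarrow> int \<Rightarrow> real"
  assumes u_pos: "u > 0" and dx_pos: "dx > 0"
    and phi_bounds: "\<And>r. 0 \<le> \<phi> r \<and> \<phi> r \<le> 1"
    and I_interval: "is_interval I"
    and c_C1: "l2_C1_on I c"
    and psi_neq: "\<And>t j. t \<in> I \<Longrightarrow> c t (j + 1) \<noteq> c t j \<Longrightarrow>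
                     \<psi> t j = \<phi> ((c t j - c t (j - 1)) / (c t (j + 1) - c t j))"
    and psi_eq: "\<And>t j. t \<in> I \<Longrightarrow> c t (j + 1) = c t j \<Longrightarrow> 0 \<le> \<psi> t j \<and> \<psi> t j \<le> 1"
    and ode: "\<And>t j. t \<in> I \<Longrightarrow>
       ((\<lambda>s. c s j) has_real_derivative
          (- u * ((c t j + (c t (j + 1) - c t j) * \<psi> t j / 2)
                  - (c t (j - 1) + (c t j - c t (j - 1)) * \<psi> t (j - 1) / 2)) / dx))
       (at t within I)"
  shows "(\<forall>t\<in>I. (\<lambda>j. (c t j - c t (j - 1))^2 * (1 - \<psi> t (j - 1))) summable_on UNIV \<and>
           (\<exists>D. ((\<lambda>s. \<Sum>\<^sub>\<infinity>j. \<bar>c s j\<bar>^2) has_real_derivative D) (at t within I) \<and>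
                dx / 2 * D = - u / 2 * (\<Sum>\<^sub>\<infinity>j. \<bar>c t j - c t (j - 1)\<bar>^2 * (1 - \<psi> t (j - 1))) \<and>
                - u / 2 * (\<Sum>\<^sub>\<infinity>j. \<bar>c t j - c t (j - 1)\<bar>^2 * (1 - \<psi> t (j - 1))) \<le> 0)) \<and>
         (\<forall>s\<in>I. \<forall>t\<in>I. s \<le> t \<longrightarrow> (\<Sum>\<^sub>\<infinity>j. \<bar>c t j\<bar>^2) \<le> (\<Sum>\<^sub>\<infinity>j. \<bar>c s j\<bar>^2))"
proof -
  obtain c' where cl2: "\<And>t. t \<in> I \<Longrightarrow> l2 (c t) \<and> l2 (c' t)"
    and fr: "\<And>t. t \<in> I \<Longrightarrow> ((\<lambda>s. l2norm (\<lambda>j. c s j - c t j - (s - t) * c' t j) / \<bar>s - t\<bar>)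
              \<longlongrightarrow> 0) (at t within I)"
    using c_C1 unfolding l2_C1_on_def by blast
  have psi01: "0 \<le> \<psi> t j \<and> \<psi> t j \<le> 1" if "t \<in> I" for t j
    using psi_neq[OF that, of j] psi_eq[OF that, of j] phi_bounds by (cases "c t (j + 1) = c t j") auto
  define S where "S t = (\<Sum>\<^sub>\<infinity>j. (c t j - c t (j - 1))^2 * (1 - \<psi> t (j - 1)))" for t
  define f where "f s = (\<Sum>\<^sub>\<infinity>j. \<bar>c s j\<bar>^2)" for s
  have Sabs: "(\<Sum>\<^sub>\<infinity>j. \<bar>c t j - c t (j - 1)\<bar>^2 * (1 - \<psi> t (j - 1))) = S t" for t
    unfolding S_def by simp
  have key: "(\<lambda>j. (c t j - c t (j - 1))^2 * (1 - \<psi> t (j - 1))) summable_on UNIV \<and>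
      (f has_real_derivative (- u / dx * S t)) (at t within I) \<and> S t \<ge> 0" if t: "t \<in> I" for t
  proof (intro conjI)
    have lct: "l2 (c t)" using cl2[OF t] by blast
    have p: "\<And>j. 0 \<le> \<psi> t j \<and> \<psi> t j \<le> 1" using psi01[OF t] by blast
    note FI = flux_identity[of "c t" "\<psi> t", OF lct p]
    show "(\<lambda>j. (c t j - c t (j - 1))^2 * (1 - \<psi> t (j - 1))) summable_on UNIV" using FI(1) .
    show "S t \<ge> 0" unfolding S_def using p by (intro infsum_nonneg) auto
    show "(f has_real_derivative (- u / dx * S t)) (at t within I)"
    proof (cases "trivial_limit (at t within I)")
      case True
      then show ?thesis by (simp add: has_field_derivative_iff)
    next
      case False
      have lc: "\<And>s. s \<in> I \<Longrightarrow> l2 (c s)" using cl2 by blast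
      have lv: "l2 (c' t)" using cl2[OF t] by blast
      have cv: "c' t j = - u / dx * ((c t j + (c t (j + 1) - c t j) * \<psi> t j / 2)
                  - (c t (j - 1) + (c t (j - 1 + 1) - c t (j - 1)) * \<psi> t (j - 1) / 2))" for j
      proof -
        have "(- u * ((c t j + (c t (j + 1) - c t j) * \<psi> t j / 2)
                  - (c t (j - 1) + (c t j - c t (j - 1)) * \<psi> t (j - 1) / 2)) / dx) = c' t j"
          by (rule coord_deriv[OF t lc lv fr[OF t] False ode[OF t]])
        then show ?thesis by simp
      qed
      have d: "(f has_real_derivative 2 * (\<Sum>\<^sub>\<infinity>j. c t j * c' t j)) (at t within I)"
        unfolding f_def by (rule norm_sq_deriv[OF t lc lv fr[OF t]])
      have E: "(\<Sum>\<^sub>\<infinity>j. c t j * ((c t j + (c t (j + 1) - c t j) * \<psi> t j / 2)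
                  - (c t (j - 1) + (c t (j - 1 + 1) - c t (j - 1)) * \<psi> t (j - 1) / 2))) = S t / 2"
        using FI(2) unfolding S_def by simp
      have "(\<Sum>\<^sub>\<infinity>j. c t j * c' t j) = (\<Sum>\<^sub>\<infinity>j. (- u / dx) * (c t j * ((c t j + (c t (j + 1) - c t j) * \<psi> t j / 2)
                  - (c t (j - 1) + (c t (j - 1 + 1) - c t (j - 1)) * \<psi> t (j - 1) / 2))))"
        by (intro infsum_cong) (simp only: cv, simp)
      also have "\<dots> = (- u / dx) * (\<Sum>\<^sub>\<infinity>j. c t j * ((c t j + (c t (j + 1) - c t j) * \<psi> t j / 2)
                  - (c t (j - 1) + (c t (j - 1 + 1) - c t (j - 1)) * \<psi> t (j - 1) / 2)))"
        by (rule infsum_cmult_right')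
      also have "\<dots> = (- u / dx) * (S t / 2)"
        by (simp only: E)
      finally have "2 * (\<Sum>\<^sub>\<infinity>j. c t j * c' t j) = - u / dx * S t" by simp
      with d show ?thesis by simp
    qed
  qed
  have part1: "\<forall>t\<in>I. (\<lambda>j. (c t j - c t (j - 1))^2 * (1 - \<psi> t (j - 1))) summable_on UNIV \<and>
           (\<exists>D. ((\<lambda>s. \<Sum>\<^sub>\<infinity>j. \<bar>c s j\<bar>^2) has_real_derivative D) (at t within I) \<and>
                dx / 2 * D = - u / 2 * (\<Sum>\<^sub>\<infinity>j. \<bar>c t j - c t (j - 1)\<bar>^2 * (1 - \<psi> t (j - 1))) \<and>
                - u / 2 * (\<Sum>\<^sub>\<infinity>j. \<bar>c t j - c t (j - 1)\<bar>^2 * (1 - \<psi> t (j - 1))) \<le> 0)"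
  proof
    fix t assume t: "t \<in> I"
    note K = key[OF t]
    have "dx / 2 * (- u / dx * S t) = - u / 2 * S t" using dx_pos by (simp add: field_simps)
    moreover have "- u / 2 * S t \<le> 0" using K u_pos by (simp add: mult_nonneg_nonneg)
    ultimately have A: "dx / 2 * (- u / dx * S t) = - u / 2 * (\<Sum>\<^sub>\<infinity>j. \<bar>c t j - c t (j - 1)\<bar>^2 * (1 - \<psi> t (j - 1)))"
      and B: "- u / 2 * (\<Sum>\<^sub>\<infinity>j. \<bar>c t j - c t (j - 1)\<bar>^2 * (1 - \<psi> t (j - 1))) \<le> 0"
      unfolding Sabs by auto
    have C: "((\<lambda>s. \<Sum>\<^sub>\<infinity>j. \<bar>c s j\<bar>^2) has_real_derivative (- u / dx * S t)) (at t within I)"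
      using K unfolding f_def by (elim conjE)
    show "(\<lambda>j. (c t j - c t (j - 1))^2 * (1 - \<psi> t (j - 1))) summable_on UNIV \<and>
           (\<exists>D. ((\<lambda>s. \<Sum>\<^sub>\<infinity>j. \<bar>c s j\<bar>^2) has_real_derivative D) (at t within I) \<and>
                dx / 2 * D = - u / 2 * (\<Sum>\<^sub>\<infinity>j. \<bar>c t j - c t (j - 1)\<bar>^2 * (1 - \<psi> t (j - 1))) \<and>
                - u / 2 * (\<Sum>\<^sub>\<infinity>j. \<bar>c t j - c t (j - 1)\<bar>^2 * (1 - \<psi> t (j - 1))) \<le> 0)"
    proof (intro conjI exI)
      show "(\<lambda>j. (c t j - c t (j - 1))^2 * (1 - \<psi> t (j - 1))) summable_on UNIV" using K by (elim conjE)
    qed (rule C, rule A, rule B)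
  qed
  have part2: "f t \<le> f s" if s: "s \<in> I" and t: "t \<in> I" and st: "s \<le> t" for s t
  proof (cases "s = t")
    case True then show ?thesis by simp
  next
    case False
    with st have lt: "s < t" by simp
    have H: "\<forall>a\<in>I. \<forall>b\<in>I. \<forall>x. a \<le> x \<and> x \<le> b \<longrightarrow> x \<in> I"
      using I_interval unfolding is_interval_1 .
    have sub: "{s..t} \<subseteq> I"
    proof
      fix x assume xr: "x \<in> {s..t}"
      have "s \<le> x \<and> x \<le> t" using xr by simp
      then show "x \<in> I" by (rule H[rule_format, OF s t])
    qed
    have cont: "continuous_on {s..t} f"
    proof (rule DERIV_continuous_on[where D="\<lambda>x. - u / dx * S x"])
      fix x assume "x \<in> {s..t}"
      then have xI: "x \<in> I" using sub by blast
      have "(f has_real_derivative (- u / dx * S x)) (at x within I)" using key[OF xI] by (elim conjE)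
      then show "(f has_real_derivative (- u / dx * S x)) (at x within {s..t})" using sub by (rule DERIV_subset)
    qed
    have intI: "{s<..<t} \<subseteq> interior I"
      using sub by (intro interior_maximal) auto
    have dat: "(f has_real_derivative (- u / dx * S x)) (at x)" if "s < x" "x < t" for x
    proof -
      have "x \<in> interior I" using intI that by auto
      moreover have "x \<in> I" using sub that by auto
      ultimately show ?thesis using key[of x] at_within_interior[of x I] by simp
    qed
    have diff: "f differentiable (at x)" if "s < x" "x < t" for x
      using dat[OF that] unfolding has_field_derivative_def by (rule differentiableI)
    obtain l z where z: "s < z" "z < t" and dz: "DERIV f z :> l" and eq: "f t - f s = (t - s) * l"
      using MVT[OF lt cont diff] by blast
    have "l = - u / dx * S z" using DERIV_unique[OF dz dat[OF z]] .
    moreover have "S z \<ge> 0"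
    proof -
      have "z \<in> {s..t}" using z by simp
      then have "z \<in> I" using sub by blast
      then show ?thesis using key[of z] by blast
    qed
    ultimately have "l \<le> 0" using u_pos dx_pos by (simp add: mult_nonneg_nonneg divide_nonneg_pos)
    then have "(t - s) * l \<le> 0" using lt by (simp add: mult_nonneg_nonpos)
    then show ?thesis using eq by simp
  qed
  show ?thesis
  proof (rule conjI)
    show "\<forall>t\<in>I. (\<lambda>j. (c t j - c t (j - 1))^2 * (1 - \<psi> t (j - 1))) summable_on UNIV \<and>
           (\<exists>D. ((\<lambda>s. \<Sum>\<^sub>\<infinity>j. \<bar>c s j\<bar>^2) has_real_derivative D) (at t within I) \<and>
                dx / 2 * D = - u / 2 * (\<Sum>\<^sub>\<infinity>j. \<bar>c t j - c t (j - 1)\<bar>^2 * (1 - \<psi> t (j - 1))) \<and>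
                - u / 2 * (\<Sum>\<^sub>\<infinity>j. \<bar>c t j - c t (j - 1)\<bar>^2 * (1 - \<psi> t (j - 1))) \<le> 0)"
      by (rule part1)
  next
    show "\<forall>s\<in>I. \<forall>t\<in>I. s \<le> t \<longrightarrow> (\<Sum>\<^sub>\<infinity>j. \<bar>c t j\<bar>^2) \<le> (\<Sum>\<^sub>\<infinity>j. \<bar>c s j\<bar>^2)"
    proof (intro ballI impI)
      fix s t assume "s \<in> I" "t \<in> I" "s \<le> t"
      from part2[OF this] show "(\<Sum>\<^sub>\<infinity>j. \<bar>c t j\<bar>^2) \<le> (\<Sum>\<^sub>\<infinity>j. \<bar>c s j\<bar>^2)" unfolding f_def .
    qed
  qed
qed

end
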